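(* Let $X$ be a $0$-dimensional, $\mathbb N$-compact space of non-measurable cardinality. Every continuous character $\chi:C_p(X,\mathbb Z)\to\mathbb T$ extends to a continuous character $\tilde\chi:C_p(X,\mathbb R)\to\mathbb T$, i.e. $\tilde\chi|_{C_p(X,\mathbb Z)}=\chi$.
   Context: Spaces are Tikhonov; $0$-dimensional means having a base of clopen sets; $\mathbb N$-compact means homeomorphic to a closed subspace of a product of copies of the discrete space $\mathbb N$. $C_p(X,\mathbb Z)$ (resp. $C_p(X,\mathbb R)$) is the group of continuous functions $X\to\mathbb Z$ with $\mathbb Z$ discrete (resp. $X\to\mathbb R$) with pointwise addition and the topology of pointwise convergence. $\mathbb T$ is the unit circle group, and a character is a continuous homomorphism into $\mathbb T$. *)

theory Defs
  imports "HOL-Analysis.Analysis"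
begin

definition tikhonov_space :: "'a topology \<Rightarrow> bool" where
  "tikhonov_space X \<longleftrightarrow> completely_regular_space X \<and> Hausdorff_space X"

definition zero_dimensional :: "'a topology \<Rightarrow> bool" where
  "zero_dimensional X \<longleftrightarrow>
     (\<forall>U x. openin X U \<and> x \<in> U \<longrightarrow>
        (\<exists>V. openin X V \<and> closedin X V \<and> x \<in> V \<and> V \<subseteq> U))"

definition N_compact_idx :: "'a topology \<Rightarrow> 'i set \<Rightarrow> bool" where
  "N_compact_idx X I \<longleftrightarrow>
     (\<exists>S. closedin (product_topology (\<lambda>_. discrete_topology (UNIV::nat set)) I) S \<and>
          X homeomorphic_space
            subtopology (product_topology (\<lambda>_. discrete_topology (UNIV::nat set)) I) S)"

definition countably_complete_ultrafilter :: "'a set \<Rightarrow> 'a set set \<Rightarrow> bool" where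
  "countably_complete_ultrafilter S U \<longleftrightarrow>
     U \<subseteq> Pow S \<and> S \<in> U \<and> {} \<notin> U \<and>
     (\<forall>A B. A \<in> U \<and> A \<subseteq> B \<and> B \<subseteq> S \<longrightarrow> B \<in> U) \<and>
     (\<forall>A. A \<subseteq> S \<longrightarrow> A \<in> U \<or> S - A \<in> U) \<and>
     (\<forall>F::nat \<Rightarrow> 'a set. range F \<subseteq> U \<longrightarrow> \<Inter>(range F) \<in> U)"

definition nonmeasurable_card :: "'a set \<Rightarrow> bool" where
  "nonmeasurable_card S \<longleftrightarrow>
     (\<forall>U. countably_complete_ultrafilter S U \<longrightarrow> (\<exists>x\<in>S. U = {A. A \<subseteq> S \<and> x \<in> A}))"

definition Cp_int :: "'a topology \<Rightarrow> ('a \<Rightarrow> int) topology" where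
  "Cp_int X = subtopology (product_topology (\<lambda>_. discrete_topology (UNIV::int set)) (topspace X))
                 {f. continuous_map X (discrete_topology UNIV) f \<and> f \<in> extensional (topspace X)}"

definition Cp_real :: "'a topology \<Rightarrow> ('a \<Rightarrow> real) topology" where
  "Cp_real X = subtopology (product_topology (\<lambda>_. euclideanreal) (topspace X))
                 {f. continuous_map X euclideanreal f \<and> f \<in> extensional (topspace X)}"

definition is_character :: "('a \<Rightarrow> 'r::ab_group_add) topology \<Rightarrow> (('a \<Rightarrow> 'r) \<Rightarrow> complex) \<Rightarrow> bool" where
  "is_character G c \<longleftrightarrow>
     continuous_map G (top_of_set (sphere 0 1)) c \<and>
     (\<forall>f\<in>topspace G. \<forall>g\<in>topspace G. c (\<lambda>x. f x + g x) = c f * c g)"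

end

theory Submission
  imports Defs
begin

lemma disc_comb2:
  assumes "continuous_map X (discrete_topology (UNIV::'b set)) f"
      and "continuous_map X (discrete_topology (UNIV::'c set)) g"
  shows "continuous_map X (discrete_topology (UNIV::'d set)) (\<lambda>x. h (f x) (g x))"
proof -
  have "continuous_map X (prod_topology (discrete_topology (UNIV::'b set)) (discrete_topology (UNIV::'c set))) (\<lambda>x. (f x, g x))"
    using assms by (simp add: continuous_map_paired)
  then have "continuous_map X (discrete_topology (UNIV \<times> UNIV)) (\<lambda>x. (f x, g x))"
    by (subst prod_topology_discrete_topology) simp
  moreover have "continuous_map (discrete_topology (UNIV \<times> UNIV)) (discrete_topology (UNIV::'d set)) (case_prod h)"
    by simp
  ultimately show ?thesis using continuous_map_compose[of X _ "\<lambda>x. (f x, g x)" _ "case_prod h"] by (simp add: o_def)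
qed

lemma sq_grow:
  fixes w :: complex
  assumes "norm w = 1" "norm (w - 1) < 1/2"
  shows "norm (w^2 - 1) \<ge> 3/2 * norm (w - 1)"
proof -
  have "w^2 - 1 = (w - 1) * (w + 1)" by (simp add: power2_eq_square algebra_simps)
  moreover have "norm (w + 1) \<ge> 3/2"
  proof -
    have "2 = norm ((w + 1) - (w - 1))" by simp
    also have "\<dots> \<le> norm (w+1) + norm (w - 1)" by (rule norm_triangle_ineq4)
    finally show ?thesis using assms by linarith
  qed
  moreover have "3/2 * norm (w - 1) \<le> norm (w + 1) * norm (w - 1)"
    using mult_right_mono[OF \<open>norm (w + 1) \<ge> 3/2\<close>, of "norm (w - 1)"] by simp
  ultimately show ?thesis by (simp only: norm_mult mult.commute)
qed

lemma small_subgroup: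
  fixes w :: complex
  assumes "norm w = 1" "\<And>k. norm (w^(2^k) - 1) < 1/2"
  shows "w = 1"
proof (rule ccontr)
  assume ne: "w \<noteq> 1"
  have g: "norm (w^(2^k) - 1) \<ge> (3/2)^k * norm (w - 1)" for k
  proof (induction k)
    case 0 then show ?case by simp
  next
    case (Suc k)
    have "w^(2^Suc k) = (w^(2^k))^2" by (simp add: power_mult[symmetric] mult.commute)
    moreover have "norm ((w^(2^k))^2 - 1) \<ge> 3/2 * norm (w^(2^k) - 1)"
      by (rule sq_grow) (use assms in \<open>auto simp: norm_power\<close>)
    ultimately show ?case using Suc by simp
  qed
  have pos: "norm (w - 1) > 0" using ne by simp
  obtain k where "(3/2::real)^k > 1 / norm (w - 1)" using real_arch_pow[of "3/2" "1 / norm (w - 1)"] by auto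
  then have "(3/2::real)^k * norm (w - 1) > 1" using pos by (simp add: field_simps)
  with g[of k] assms(2)[of k] show False by linarith
qed


lemma main_part:
  fixes X :: "'a topology" and chi :: "('a \<Rightarrow> int) \<Rightarrow> complex"
  assumes tik: "tikhonov_space X"
    and zd: "zero_dimensional X"
    and ch: "is_character (Cp_int X) chi"
  shows "\<exists>F \<theta> a0. finite F \<and> F \<subseteq> topspace X \<and> norm a0 = 1 \<and>
     (\<forall>f\<in>topspace (Cp_int X). chi f = a0 * exp (\<i> * of_real (\<Sum>x\<in>F. \<theta> x * real_of_int (f x)))) \<and>
     (a0 \<noteq> 1 \<longrightarrow> (\<exists>x0. x0 \<notin> topspace X) \<and> (undefined::int) \<noteq> 0)"
proof -
  define u where "u = (undefined::int)"
  define T where "T = topspace (Cp_int X)"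
  define C where "C = {\<phi>::'a\<Rightarrow>int. continuous_map X (discrete_topology UNIV) \<phi>}"
  define R where "R = (\<lambda>\<phi>::'a\<Rightarrow>int. \<lambda>x. if x \<in> topspace X then \<phi> x else u)"
  define P where "P = product_topology (\<lambda>_. discrete_topology (UNIV::int set)) (topspace X)"
  define S where "S = {f::'a\<Rightarrow>int. continuous_map X (discrete_topology UNIV) f \<and> f \<in> extensional (topspace X)}"
  have CpS: "Cp_int X = subtopology P S" unfolding Cp_int_def P_def S_def by simp
  have T_eq: "T = S" unfolding T_def S_def CpS P_def by (auto simp: PiE_def)
  have RT: "R \<phi> \<in> T" if "\<phi> \<in> C" for \<phi>
  proof -
    have "continuous_map X (discrete_topology UNIV) (R \<phi>)"
      using that unfolding C_def by (auto intro: continuous_map_eq simp: R_def)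
    then show ?thesis unfolding T_eq S_def by (auto simp: R_def u_def extensional_def)
  qed
  have fT: "R f = f" if "f \<in> T" for f
    using that unfolding T_eq S_def by (auto simp: R_def u_def extensional_def fun_eq_iff)
  have TC: "f \<in> C" if "f \<in> T" for f using that unfolding T_eq S_def C_def by auto
  have C_comb: "(\<lambda>x. h (\<phi> x) (\<psi> x)) \<in> C" if "\<phi> \<in> C" "\<psi> \<in> C" for \<phi> \<psi> and h :: "int \<Rightarrow> int \<Rightarrow> int"
    using that disc_comb2[of X \<phi> \<psi> h] unfolding C_def by auto
  have C0: "(\<lambda>x. c) \<in> C" for c :: int unfolding C_def by simp
  have cont: "continuous_map (Cp_int X) (top_of_set (sphere 0 1)) chi"
    and hom: "\<And>f g. f \<in> T \<Longrightarrow> g \<in> T \<Longrightarrow> chi (\<lambda>x. f x + g x) = chi f * chi g"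
    using ch unfolding is_character_def T_def by auto
  have n1: "norm (chi f) = 1" if "f \<in> T" for f
    using cont that unfolding T_def continuous_map_def by auto
  define a0 where "a0 = chi (R (\<lambda>x. 0))"
  have a0n: "norm a0 = 1" unfolding a0_def using n1 RT C0 by blast
  have a0nz: "a0 \<noteq> 0" using a0n by auto
  have key: "chi (R \<phi>) * chi (R \<psi>) = chi (R (\<lambda>x. \<phi> x + \<psi> x)) * a0" if "\<phi> \<in> C" "\<psi> \<in> C" for \<phi> \<psi>
  proof -
    have "chi (R \<phi>) * chi (R \<psi>) = chi (\<lambda>x. R \<phi> x + R \<psi> x)" using hom RT that by simp
    also have "(\<lambda>x. R \<phi> x + R \<psi> x) = (\<lambda>x. R (\<lambda>x. \<phi> x + \<psi> x) x + R (\<lambda>x. 0) x)"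
      by (auto simp: R_def fun_eq_iff)
    also have "chi \<dots> = chi (R (\<lambda>x. \<phi> x + \<psi> x)) * a0"
      unfolding a0_def using hom RT that C_comb C0 by simp
    finally show ?thesis .
  qed
  define b where "b = (\<lambda>\<phi>. chi (R \<phi>) / a0)"
  have bhom: "b (\<lambda>x. \<phi> x + \<psi> x) = b \<phi> * b \<psi>" if "\<phi> \<in> C" "\<psi> \<in> C" for \<phi> \<psi>
    using key[OF that] a0nz unfolding b_def by (simp add: field_simps power2_eq_square)
  have bnorm: "norm (b \<phi>) = 1" if "\<phi> \<in> C" for \<phi>
    using n1[OF RT[OF that]] a0n unfolding b_def by (simp add: norm_divide)
  have b0: "b (\<lambda>x. 0) = 1" unfolding b_def a0_def using a0nz a0_def by simp
  have bpow: "b (\<lambda>x. of_nat n * \<phi> x) = b \<phi> ^ n" if "\<phi> \<in> C" for \<phi> n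
  proof (induction n)
    case 0 then show ?case using b0 by simp
  next
    case (Suc n)
    have "(\<lambda>x. of_nat (Suc n) * \<phi> x) = (\<lambda>x. of_nat n * \<phi> x + \<phi> x)" by (simp add: algebra_simps)
    then show ?case using bhom[of "\<lambda>x. of_nat n * \<phi> x" \<phi>] Suc C_comb[OF C0 that, of "\<lambda>a b. of_nat n * b"] that
      by simp
  qed
  have "openin (Cp_int X) {g \<in> topspace (Cp_int X). chi g \<in> sphere 0 1 \<inter> ball a0 (1/2)}"
    by (rule openin_continuous_map_preimage[OF cont]) (rule openin_open_Int, simp)
  then obtain U where U: "openin P U" and Ueq: "{g \<in> T. chi g \<in> sphere 0 1 \<inter> ball a0 (1/2)} = U \<inter> S"
    unfolding CpS T_def by (auto simp: openin_subtopology)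
  have zU: "R (\<lambda>x. 0) \<in> U" using Ueq RT[OF C0] a0n T_eq unfolding a0_def by auto
  obtain W where Wfin: "finite {i \<in> topspace X. W i \<noteq> topspace (discrete_topology (UNIV::int set))}"
    and zW: "R (\<lambda>x. 0) \<in> Pi\<^sub>E (topspace X) W" and WU: "Pi\<^sub>E (topspace X) W \<subseteq> U"
    using U zU unfolding P_def openin_product_topology_alt by blast
  define F where "F = {i \<in> topspace X. W i \<noteq> UNIV}"
  have finF: "finite F" and FX: "F \<subseteq> topspace X" using Wfin unfolding F_def by auto
  have small: "norm (b \<phi> - 1) < 1/2" if "\<phi> \<in> C" "\<forall>x\<in>F. \<phi> x = 0" for \<phi>
  proof -
    have "R \<phi> \<in> Pi\<^sub>E (topspace X) W"
    proof -
      have "R \<phi> i \<in> W i" if "i \<in> topspace X" for i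
      proof (cases "i \<in> F")
        case True
        then have "R \<phi> i = R (\<lambda>x. 0) i" using \<open>\<forall>x\<in>F. \<phi> x = 0\<close> that by (simp add: R_def)
        then show ?thesis using zW that by (metis PiE_mem)
      next
        case False then show ?thesis using that unfolding F_def by auto
      qed
      then show ?thesis by (auto simp: PiE_def R_def u_def extensional_def)
    qed
    then have "R \<phi> \<in> U \<inter> S" using WU RT[OF that(1)] T_eq by auto
    then have "chi (R \<phi>) \<in> ball a0 (1/2)" using Ueq by blast
    then have "norm (chi (R \<phi>) - a0) < 1/2" by (simp add: dist_norm norm_minus_commute)
    moreover have "b \<phi> - 1 = (chi (R \<phi>) - a0) / a0" unfolding b_def using a0nz by (simp add: field_simps)
    ultimately show ?thesis using a0n by (simp add: norm_divide)
  qed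
  have triv: "b \<phi> = 1" if "\<phi> \<in> C" "\<forall>x\<in>F. \<phi> x = 0" for \<phi>
  proof (rule small_subgroup)
    show "norm (b \<phi>) = 1" using bnorm that by simp
    fix k :: nat
    have "b \<phi> ^ (2^k) = b (\<lambda>x. of_nat (2^k) * \<phi> x)" using bpow[OF that(1), of "2^k"] by simp
    moreover have "(\<lambda>x. of_nat (2^k) * \<phi> x) \<in> C" using C_comb[OF C0 that(1), of "\<lambda>a b. of_nat (2^k) * b"] by simp
    ultimately show "norm (b \<phi> ^ (2^k) - 1) < 1/2" using small that by simp
  qed
  have agree: "b \<phi> = b \<psi>" if "\<phi> \<in> C" "\<psi> \<in> C" "\<forall>x\<in>F. \<phi> x = \<psi> x" for \<phi> \<psi>
  proof -
    have d: "(\<lambda>x. \<phi> x - \<psi> x) \<in> C" using C_comb[OF that(1,2), of "(-)"] by simp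
    have "(\<lambda>x. \<phi> x) = (\<lambda>x. \<psi> x + (\<phi> x - \<psi> x))" by simp
    then have "b \<phi> = b \<psi> * b (\<lambda>x. \<phi> x - \<psi> x)" using bhom[OF that(2) d] by simp
    also have "b (\<lambda>x. \<phi> x - \<psi> x) = 1" using triv[OF d] that(3) by simp
    finally show ?thesis by simp
  qed
  have sep: "\<exists>e. e \<in> C \<and> e x = 1 \<and> (\<forall>y\<in>F. y \<noteq> x \<longrightarrow> e y = 0)" if "x \<in> F" for x
  proof -
    have t1: "t1_space X" using tik unfolding tikhonov_space_def by (simp add: Hausdorff_imp_t1_space)
    have "closedin X (F - {x})" using t1 finF FX unfolding t1_space_closedin_finite by auto
    then have "openin X (topspace X - (F - {x}))" by (simp add: openin_diff)
    moreover have "x \<in> topspace X - (F - {x})" using that FX by auto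
    ultimately obtain V where V: "openin X V" "closedin X V" "x \<in> V" "V \<subseteq> topspace X - (F - {x})"
      using zd unfolding zero_dimensional_def by blast
    define e where "e = (\<lambda>y. if y \<in> V then 1 else 0::int)"
    have Vs: "V \<subseteq> topspace X" using V openin_subset by auto
    have o2: "openin X (topspace X - V)" using V by (simp add: closedin_def)
    have "openin X {y \<in> topspace X. e y \<in> A}" for A
    proof -
      have "{y \<in> topspace X. e y \<in> A} =
            (if (1::int) \<in> A then V else {}) \<union> (if (0::int) \<in> A then topspace X - V else {})"
        using Vs by (auto simp: e_def)
      then show ?thesis using V(1) o2 by auto
    qed
    then have "e \<in> C" unfolding C_def by (auto simp: continuous_map_def)
    moreover have "e x = 1" using V by (simp add: e_def)
    moreover have "\<forall>y\<in>F. y \<noteq> x \<longrightarrow> e y = 0" using V by (auto simp: e_def)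
    ultimately show ?thesis by blast
  qed
  then obtain e where e: "\<And>x. x \<in> F \<Longrightarrow> e x \<in> C \<and> e x x = 1 \<and> (\<forall>y\<in>F. y \<noteq> x \<longrightarrow> e x y = 0)"
    by metis
  define \<theta> where "\<theta> = (\<lambda>x. Arg (b (e x)))"
  have bexp: "b (e x) = exp (\<i> * of_real (\<theta> x))" if "x \<in> F" for x
  proof -
    have "norm (b (e x)) = 1" using bnorm e that by blast
    then have "b (e x) \<noteq> 0" by auto
    then show ?thesis using Arg_eq[of "b (e x)"] \<open>norm (b (e x)) = 1\<close> unfolding \<theta>_def by simp
  qed
  have bint: "b (\<lambda>y. of_int n * h y) = exp (\<i> * of_real (of_int n * t))"
    if h: "h \<in> C" "b h = exp (\<i> * of_real t)" for h t n
  proof -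
    have nat: "b (\<lambda>y. of_nat m * h y) = exp (\<i> * of_real (of_nat m * t))" for m
    proof -
      have "b (\<lambda>y. of_nat m * h y) = exp (\<i> * of_real t) ^ m" using bpow h by simp
      also have "\<dots> = exp (of_nat m * (\<i> * of_real t))" by (simp add: exp_of_nat_mult)
      finally show ?thesis by (simp add: mult_ac)
    qed
    have mC: "(\<lambda>y. of_int k * h y) \<in> C" for k :: int using C_comb[OF C0 h(1), of "\<lambda>a b. k * b"] by simp
    show ?thesis
    proof (cases "n \<ge> 0")
      case True
      then have "n = of_nat (nat n)" by simp
      then show ?thesis using nat[of "nat n"] by (metis of_int_of_nat_eq)
    next
      case False
      define m where "m = nat (- n)"
      have nm: "n = - of_nat m" using False m_def by simp
      have "b (\<lambda>y. of_int n * h y) * b (\<lambda>y. of_nat m * h y) = b (\<lambda>y. of_int n * h y + of_nat m * h y)"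
        using bhom mC[of n] mC[of "of_nat m"] by simp
      also have "(\<lambda>y. of_int n * h y + of_nat m * h y) = (\<lambda>y. 0)" by (simp add: nm algebra_simps)
      finally have "b (\<lambda>y. of_int n * h y) * exp (\<i> * of_real (of_nat m * t)) = 1" using b0 nat by simp
      then have "b (\<lambda>y. of_int n * h y) = exp (- (\<i> * of_real (of_nat m * t)))"
        by (simp add: exp_minus field_simps)
      then show ?thesis by (simp add: nm)
    qed
  qed
  have bsum: "finite A \<Longrightarrow> (\<forall>a\<in>A. k a \<in> C) \<Longrightarrow> (\<lambda>y. \<Sum>a\<in>A. k a y) \<in> C \<and> b (\<lambda>y. \<Sum>a\<in>A. k a y) = (\<Prod>a\<in>A. b (k a))"
    for A and k :: "'a \<Rightarrow> 'a \<Rightarrow> int"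
  proof (induction A rule: finite_induct)
    case empty then show ?case using C0 b0 by simp
  next
    case (insert a A)
    then have i: "(\<lambda>y. \<Sum>a\<in>A. k a y) \<in> C" "b (\<lambda>y. \<Sum>a\<in>A. k a y) = (\<Prod>a\<in>A. b (k a))" "k a \<in> C" by auto
    have "(\<lambda>y. \<Sum>a\<in>insert a A. k a y) = (\<lambda>y. k a y + (\<Sum>a\<in>A. k a y))" using insert by simp
    then show ?case using C_comb[OF i(3) i(1), of "(+)"] bhom[OF i(3) i(1)] i(2) insert by simp
  qed
  have bform: "b \<phi> = exp (\<i> * of_real (\<Sum>x\<in>F. \<theta> x * real_of_int (\<phi> x)))" if "\<phi> \<in> C" for \<phi>
  proof -
    define g where "g = (\<lambda>y. \<Sum>x\<in>F. \<phi> x * e x y)"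
    have kC: "\<forall>x\<in>F. (\<lambda>y. \<phi> x * e x y) \<in> C" 
    proof
      fix x assume "x \<in> F"
      then have "e x \<in> C" using e by blast
      then show "(\<lambda>y. \<phi> x * e x y) \<in> C" using C_comb[OF C0, of "e x" "\<lambda>a b. \<phi> x * b"] by simp
    qed
    have gs: "g \<in> C" "b g = (\<Prod>x\<in>F. b (\<lambda>y. \<phi> x * e x y))" using bsum[OF finF kC] unfolding g_def by auto
    have "\<forall>y\<in>F. \<phi> y = g y"
    proof
      fix y assume y: "y \<in> F"
      have "g y = \<phi> y * e y y + (\<Sum>x\<in>F - {y}. \<phi> x * e x y)"
        unfolding g_def using finF y by (simp add: sum.remove)
      also have "(\<Sum>x\<in>F - {y}. \<phi> x * e x y) = 0" using e y by (intro sum.neutral) auto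
      finally show "\<phi> y = g y" using e y by simp
    qed
    then have "b \<phi> = b g" using agree that gs by blast
    also have "\<dots> = (\<Prod>x\<in>F. exp (\<i> * of_real (of_int (\<phi> x) * \<theta> x)))"
      using gs(2) bint e bexp by (auto intro: prod.cong)
    also have "\<dots> = exp (\<Sum>x\<in>F. \<i> * of_real (of_int (\<phi> x) * \<theta> x))" using finF by (simp add: exp_sum)
    also have "(\<Sum>x\<in>F. \<i> * of_real (of_int (\<phi> x) * \<theta> x)) = \<i> * of_real (\<Sum>x\<in>F. \<theta> x * real_of_int (\<phi> x))"
      by (simp add: sum_distrib_left mult_ac)
    finally show ?thesis .
  qed
  have chiform: "chi f = a0 * exp (\<i> * of_real (\<Sum>x\<in>F. \<theta> x * real_of_int (f x)))" if "f \<in> T" for f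
    using bform[OF TC[OF that]] fT[OF that] a0nz unfolding b_def by (simp add: field_simps)
  have last: "(\<exists>x0. x0 \<notin> topspace X) \<and> (undefined::int) \<noteq> 0" if "a0 \<noteq> 1"
  proof (rule ccontr)
    assume "\<not> ?thesis"
    then have eq: "(\<lambda>x. R (\<lambda>x. 0) x + R (\<lambda>x. 0) x) = R (\<lambda>x. 0)" by (auto simp: R_def u_def fun_eq_iff)
    have h: "chi (\<lambda>x. R (\<lambda>x. 0) x + R (\<lambda>x. 0) x) = chi (R (\<lambda>x. 0)) * chi (R (\<lambda>x. 0))"
      by (rule hom[OF RT[OF C0] RT[OF C0]])
    have "a0 * a0 = a0" unfolding a0_def using h eq by metis
    then show False using a0nz that by simp
  qed
  show ?thesis using finF FX a0n chiform last unfolding T_def by blast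
qed

theorem proposition6p2:
  fixes X :: "'a topology" and I :: "'i set" and chi :: "('a \<Rightarrow> int) \<Rightarrow> complex"
  assumes "tikhonov_space X"
    and "zero_dimensional X"
    and "N_compact_idx X I"
    and "nonmeasurable_card (topspace X)"
    and "is_character (Cp_int X) chi"
  shows "\<exists>psi :: ('a \<Rightarrow> real) \<Rightarrow> complex. is_character (Cp_real X) psi \<and>
           (\<forall>f\<in>topspace (Cp_int X). psi (\<lambda>x. real_of_int (f x)) = chi f)"
proof -
  obtain F \<theta> a0 where finF: "finite F" and FX: "F \<subseteq> topspace X" and a0n: "norm a0 = 1"
    and chif: "\<And>f. f\<in>topspace (Cp_int X) \<Longrightarrow> chi f = a0 * exp (\<i> * of_real (\<Sum>x\<in>F. \<theta> x * real_of_int (f x)))"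
    and lst: "a0 \<noteq> 1 \<Longrightarrow> (\<exists>x0. x0 \<notin> topspace X) \<and> (undefined::int) \<noteq> 0"
    using main_part[OF assms(1,2,5)] by blast
  define \<alpha> where "\<alpha> = Arg a0"
  have a0e: "a0 = exp (\<i> * of_real \<alpha>)"
  proof -
    have "a0 \<noteq> 0" using a0n by auto
    then show ?thesis using Arg_eq[of a0] a0n unfolding \<alpha>_def by simp
  qed
  define c where "c = (if a0 = 1 then 0 else \<alpha> / real_of_int (undefined::int))"
  define x0 where "x0 = (if a0 = 1 then undefined else (SOME x0. x0 \<notin> topspace X))"
  have cx1: "x0 \<notin> topspace X \<and> c * real_of_int (undefined::int) = \<alpha>" if False: "a0 \<noteq> 1"
  proof -
    obtain y where "y \<notin> topspace X" using lst False by blast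
    then have "x0 \<notin> topspace X" using False unfolding x0_def by (simp add: someI[of "\<lambda>x. x \<notin> topspace X" y])
    moreover have "c * real_of_int (undefined::int) = \<alpha>" using False lst unfolding c_def by simp
    ultimately show ?thesis by blast
  qed
  have cx0: "c = 0 \<or> (x0 \<notin> topspace X \<and> c * real_of_int (undefined::int) = \<alpha>)"
    using cx1 c_def by auto
  define L where "L = (\<lambda>g::'a\<Rightarrow>real. c * g x0 + (\<Sum>x\<in>F. \<theta> x * g x))"
  define psi where "psi = (\<lambda>g. exp (\<i> * of_real (L g)))"
  have TR: "topspace (Cp_real X) = {f. continuous_map X euclideanreal f \<and> f \<in> extensional (topspace X)}"
    unfolding Cp_real_def by (auto simp: PiE_def)
  have TI: "topspace (Cp_int X) = {f. continuous_map X (discrete_topology UNIV) f \<and> f \<in> extensional (topspace X)}"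
    unfolding Cp_int_def by (auto simp: PiE_def)
  have contL: "continuous_map (Cp_real X) euclideanreal L"
  proof -
    have "continuous_map (Cp_real X) euclideanreal (\<lambda>g. c * g x0)"
    proof (rule continuous_map_eq[of _ _ "\<lambda>g. c * undefined"])
      show "continuous_map (Cp_real X) euclideanreal (\<lambda>g. c * undefined)" by simp
      show "\<And>g. g \<in> topspace (Cp_real X) \<Longrightarrow> c * undefined = c * g x0"
        using cx0 unfolding TR by (auto simp: extensional_def)
    qed
    moreover have "continuous_map (Cp_real X) euclideanreal (\<lambda>g. \<Sum>x\<in>F. \<theta> x * g x)"
    proof (rule continuous_map_sum[OF finF])
      fix i assume "i \<in> F"
      then have "continuous_map (Cp_real X) euclideanreal (\<lambda>g. g i)"
        unfolding Cp_real_def using FX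
        by (intro continuous_map_from_subtopology continuous_map_product_projection) auto
      then show "continuous_map (Cp_real X) euclideanreal (\<lambda>g. \<theta> i * g i)"
        by (rule continuous_map_real_mult_left)
    qed
    ultimately show ?thesis unfolding L_def by (rule continuous_map_add)
  qed
  have contE: "continuous_map euclideanreal euclidean (\<lambda>r::real. exp (\<i> * of_real r))"
    by (simp add: continuous_on_exp continuous_intros)
  have contpsi: "continuous_map (Cp_real X) (top_of_set (sphere 0 1)) psi"
  proof (rule continuous_map_into_subtopology)
    show "continuous_map (Cp_real X) euclidean psi"
      using continuous_map_compose[OF contL contE] unfolding psi_def by (simp add: o_def)
    show "psi \<in> topspace (Cp_real X) \<rightarrow> sphere 0 1" unfolding psi_def by simp
  qed
  have hompsi: "psi (\<lambda>x. f x + g x) = psi f * psi g" for f g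
    unfolding psi_def L_def by (simp add: algebra_simps sum.distrib exp_add[symmetric])
  have ext: "psi (\<lambda>x. real_of_int (f x)) = chi f" if "f \<in> topspace (Cp_int X)" for f
  proof -
    have "c * real_of_int (f x0) = (if a0 = 1 then 0 else \<alpha>)"
    proof (cases "a0 = 1")
      case True then show ?thesis by (simp add: c_def)
    next
      case False
      then have "f x0 = undefined" using cx1 that unfolding TI by (auto simp: extensional_def)
      then show ?thesis using cx1 False by simp
    qed
    then have "psi (\<lambda>x. real_of_int (f x)) = exp (\<i> * of_real (if a0 = 1 then 0 else \<alpha>)) * exp (\<i> * of_real (\<Sum>x\<in>F. \<theta> x * real_of_int (f x)))"
      unfolding psi_def L_def by (simp add: distrib_left exp_add)
    also have "\<dots> = chi f" using chif[OF that] a0e by auto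
    finally show ?thesis .
  qed
  show ?thesis using contpsi hompsi ext unfolding is_character_def by blast
qed

end
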